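(* Let $0<\lambda<\sqrt2$. Define coefficients $a_0=a_1=-\dfrac{1}{1-\lambda^2/2}$ and $a_{n+1}=\dfrac{n}{(n+1)(1+\lambda^2 n/2)}\,a_n$ for $n\ge1$, and set $$Y(x)=a_0\ln x+\sum_{n=1}^\infty a_nx^n,\qquad x>0$$ (the series converges for all $x$). Then $Y$ satisfies $\tfrac12\lambda^2x^2Y''+x(1-x)Y'=-1$ on $(0,\infty)$. For $0<\epsilon<1$ let $u(x;\epsilon)$ be the solution of $$\tfrac12\lambda^2x^2u''(x)+x(1-x)u'(x)=-1\ \ (\epsilon<x<1),\qquad u(\epsilon)=0,\ u(1)=0.$$ Then for every $x\in(0,1)$, $$\lim_{\epsilon\to0}u(x;\epsilon)=Y(x)-Y(1),$$ and $u(x):=Y(x)-Y(1)$ solves $\tfrac12\lambda^2x^2u''+x(1-x)u'=-1$ on $(0,1)$ with $u(1)=0$; moreover $u(x)\to\infty$ as $x\to0^+$.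
   Context: $u(x;\epsilon)$ is the mean exit time from $(\epsilon,1)$ of the solution of $dX=X(1-X)\,dt+\lambda X\,dB$ (Itô) started at $x$; the limit $u(x)$ is interpreted as the expected time to reach the (rescaled) carrying capacity $x=1$. *)

theory Defs
  imports "HOL-Analysis.Analysis"
begin

fun mt_a :: "real \<Rightarrow> nat \<Rightarrow> real" where
  "mt_a lam 0 = - 1 / (1 - lam\<^sup>2 / 2)"
| "mt_a lam (Suc 0) = - 1 / (1 - lam\<^sup>2 / 2)"
| "mt_a lam (Suc (Suc n)) =
     real (Suc n) / (real (Suc (Suc n)) * (1 + lam\<^sup>2 * real (Suc n) / 2)) * mt_a lam (Suc n)"

definition mt_Y :: "real \<Rightarrow> real \<Rightarrow> real" where
  "mt_Y lam x = mt_a lam 0 * ln x + (\<Sum>n. mt_a lam (Suc n) * x ^ Suc n)"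

end

theory Submission
  imports Defs "HOL-Real_Asymp.Real_Asymp"
begin


definition cc :: "real \<Rightarrow> nat \<Rightarrow> real" where
  "cc lam n = (if n = 0 then 0 else mt_a lam n)"

lemma a_rec: "n \<ge> 1 \<Longrightarrow> mt_a lam (Suc n) = real n / (real (Suc n) * (1 + lam\<^sup>2 * real n / 2)) * mt_a lam n"
  by (cases n) auto

lemma cc_summable:
  assumes lp: "0 < lam"
  shows "summable (\<lambda>n. cc lam n * x ^ n)"
proof (rule summable_ratio_test[where c = "1/2" and N = "nat \<lceil>4 * \<bar>x\<bar> / lam\<^sup>2\<rceil> + 1"])
  fix n assume nN: "nat \<lceil>4 * \<bar>x\<bar> / lam\<^sup>2\<rceil> + 1 \<le> n"
  have n1: "n \<ge> 1" using nN by simp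
  have l2: "lam\<^sup>2 > 0" using lp by simp
  have "4 * \<bar>x\<bar> / lam\<^sup>2 \<le> real n" using nN by linarith
  hence xb: "\<bar>x\<bar> \<le> lam\<^sup>2 * real n / 4" using l2 by (simp add: field_simps)
  define r where "r = real n / (real (Suc n) * (1 + lam\<^sup>2 * real n / 2))"
  have d: "1 + lam\<^sup>2 * real n / 2 > 0" using l2 by (simp add: add_pos_nonneg)
  have r0: "0 \<le> r" unfolding r_def using d by simp
  have r1: "r \<le> 1 / (1 + lam\<^sup>2 * real n / 2)" unfolding r_def using d
    by (simp add: divide_simps)
  have "r * \<bar>x\<bar> \<le> 1 / (1 + lam\<^sup>2 * real n / 2) * (lam\<^sup>2 * real n / 4)"
    using r0 r1 xb by (intro mult_mono) auto
  also have "\<dots> \<le> 1/2" using d l2 by (simp add: divide_simps)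
  finally have rx: "r * \<bar>x\<bar> \<le> 1/2" .
  have "cc lam (Suc n) * x ^ Suc n = (r * x) * (cc lam n * x ^ n)"
    using n1 unfolding cc_def r_def by (simp add: a_rec[OF n1])
  hence "norm (cc lam (Suc n) * x ^ Suc n) = (r * \<bar>x\<bar>) * norm (cc lam n * x ^ n)"
    using r0 by (simp only: real_norm_def abs_mult)
  also have "\<dots> \<le> 1/2 * norm (cc lam n * x ^ n)" using rx by (intro mult_right_mono) auto
  finally show "norm (cc lam (Suc n) * x ^ Suc n) \<le> 1/2 * norm (cc lam n * x ^ n)" .
qed simp

definition FF where "FF lam x = (\<Sum>n. cc lam n * x ^ n)"
definition F1 where "F1 lam x = (\<Sum>n. diffs (cc lam) n * x ^ n)"
definition F2 where "F2 lam x = (\<Sum>n. diffs (diffs (cc lam)) n * x ^ n)"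

lemma d1_summable: "0 < lam \<Longrightarrow> summable (\<lambda>n. diffs (cc lam) n * x ^ n)"
  by (rule termdiff_converges_all) (rule cc_summable)

lemma d2_summable: "0 < lam \<Longrightarrow> summable (\<lambda>n. diffs (diffs (cc lam)) n * x ^ n)"
  by (rule termdiff_converges_all) (rule d1_summable)

lemma FF_deriv: "0 < lam \<Longrightarrow> (FF lam has_real_derivative F1 lam x) (at x)"
  unfolding FF_def F1_def
  by (rule termdiffs_strong_converges_everywhere) (rule cc_summable)

lemma F1_deriv: "0 < lam \<Longrightarrow> (F1 lam has_real_derivative F2 lam x) (at x)"
  unfolding F1_def F2_def
  by (rule termdiffs_strong_converges_everywhere) (rule d1_summable)

lemma Y_eq: "0 < lam \<Longrightarrow> mt_Y lam x = mt_a lam 0 * ln x + FF lam x"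
proof -
  assume lp: "0 < lam"
  have "(\<Sum>n. mt_a lam (Suc n) * x ^ Suc n) = (\<Sum>n. cc lam (Suc n) * x ^ Suc n)"
    by (simp add: cc_def)
  also have "\<dots> = FF lam x - cc lam 0 * x ^ 0"
    unfolding FF_def by (rule suminf_split_head) (rule cc_summable[OF lp])
  also have "\<dots> = FF lam x" by (simp add: cc_def)
  finally show ?thesis unfolding mt_Y_def by simp
qed

lemma sum_id:
  assumes lp: "0 < lam"
  shows "lam\<^sup>2 / 2 * (x\<^sup>2 * F2 lam x) + x * F1 lam x - x\<^sup>2 * F1 lam x = mt_a lam 0 * x"
proof -
  define A where "A n = real n * real (n - 1) * cc lam n * x ^ n" for n
  define B where "B n = real n * cc lam n * x ^ n" for n
  define C where "C n = real (n - 1) * cc lam (n - 1) * x ^ n" for n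
  have s2: "(\<lambda>n. x\<^sup>2 * (diffs (diffs (cc lam)) n * x ^ n)) sums (x\<^sup>2 * F2 lam x)"
    unfolding F2_def by (rule sums_mult) (rule summable_sums[OF d2_summable[OF lp]])
  have "(\<lambda>n. x\<^sup>2 * (diffs (diffs (cc lam)) n * x ^ n)) = (\<lambda>n. A (Suc (Suc n)))"
    unfolding A_def diffs_def by (auto simp: power2_eq_square algebra_simps)
  with s2 have "(\<lambda>n. A (Suc (Suc n))) sums (x\<^sup>2 * F2 lam x)" by simp
  hence "(\<lambda>n. A (Suc n)) sums ((x\<^sup>2 * F2 lam x) + A (Suc 0))" using sums_Suc_iff[of "\<lambda>n. A (Suc n)"] by simp
  hence sA: "A sums (x\<^sup>2 * F2 lam x)" using sums_Suc_iff[of A] by (simp add: A_def)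
  have s1: "(\<lambda>n. x * (diffs (cc lam) n * x ^ n)) sums (x * F1 lam x)"
    unfolding F1_def by (rule sums_mult) (rule summable_sums[OF d1_summable[OF lp]])
  have "(\<lambda>n. x * (diffs (cc lam) n * x ^ n)) = (\<lambda>n. B (Suc n))"
    unfolding B_def diffs_def by (auto simp: algebra_simps)
  with s1 have "(\<lambda>n. B (Suc n)) sums (x * F1 lam x)" by simp
  hence sB: "B sums (x * F1 lam x)" using sums_Suc_iff[of B] by (simp add: B_def)
  have s3: "(\<lambda>n. x\<^sup>2 * (diffs (cc lam) n * x ^ n)) sums (x\<^sup>2 * F1 lam x)"
    unfolding F1_def by (rule sums_mult) (rule summable_sums[OF d1_summable[OF lp]])
  have "(\<lambda>n. x\<^sup>2 * (diffs (cc lam) n * x ^ n)) = (\<lambda>n. C (Suc (Suc n)))"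
    unfolding C_def diffs_def by (auto simp: power2_eq_square algebra_simps)
  with s3 have "(\<lambda>n. C (Suc (Suc n))) sums (x\<^sup>2 * F1 lam x)" by simp
  hence "(\<lambda>n. C (Suc n)) sums ((x\<^sup>2 * F1 lam x) + C (Suc 0))" using sums_Suc_iff[of "\<lambda>n. C (Suc n)"] by simp
  hence sC: "C sums (x\<^sup>2 * F1 lam x)" using sums_Suc_iff[of C] by (simp add: C_def)
  have sG: "(\<lambda>n. lam\<^sup>2 / 2 * A n + B n - C n) sums
      (lam\<^sup>2 / 2 * (x\<^sup>2 * F2 lam x) + x * F1 lam x - x\<^sup>2 * F1 lam x)"
    by (intro sums_diff sums_add sums_mult sA sB sC)
  have G: "lam\<^sup>2 / 2 * A n + B n - C n = (if n = 1 then mt_a lam 0 * x else 0)" for n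
  proof (cases n)
    case 0 thus ?thesis by (simp add: A_def B_def C_def)
  next
    case (Suc m) note nm = this
    show ?thesis
    proof (cases m)
      case 0 thus ?thesis using nm by (simp add: A_def B_def C_def cc_def)
    next
      case (Suc k)
      have d: "1 + lam\<^sup>2 * real (Suc k) / 2 > 0" by (simp add: add_pos_nonneg)
      have rec: "mt_a lam (Suc (Suc k)) = real (Suc k) / (real (Suc (Suc k)) * (1 + lam\<^sup>2 * real (Suc k) / 2)) * mt_a lam (Suc k)"
        by simp
      have "lam\<^sup>2 / 2 * A n + B n = real (Suc (Suc k)) * (1 + lam\<^sup>2 * real (Suc k) / 2) * mt_a lam (Suc (Suc k)) * x ^ n"
        using nm Suc by (simp add: A_def B_def cc_def algebra_simps del: mt_a.simps)
      also have "real (Suc (Suc k)) * (1 + lam\<^sup>2 * real (Suc k) / 2) * mt_a lam (Suc (Suc k)) = real (Suc k) * mt_a lam (Suc k)"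
      proof -
        have g: "N * D * (m / (N * D) * a) = m * a" if "N * D \<noteq> 0" for N D m a :: real
          using that by simp
        show ?thesis apply (subst rec) apply (rule g) using d by simp
      qed
      also have "real (Suc k) * mt_a lam (Suc k) * x ^ n = C n" using nm Suc by (simp add: C_def cc_def del: mt_a.simps)
      finally show ?thesis using nm Suc by simp
    qed
  qed
  have "(\<lambda>n. lam\<^sup>2 / 2 * A n + B n - C n) sums (mt_a lam 0 * x)"
    unfolding G using sums_single[of 1 "\<lambda>_. mt_a lam 0 * x"] by simp
  from sums_unique2[OF sG this] show ?thesis .
qed



lemma a0_prop: "lam\<^sup>2 < 2 \<Longrightarrow> mt_a lam 0 * (1 - lam\<^sup>2 / 2) = -1"
  by simp

lemma a0_neg: "lam\<^sup>2 < 2 \<Longrightarrow> mt_a lam 0 < 0"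
  by (simp add: divide_simps)

lemma Y_fun: "0 < lam \<Longrightarrow> mt_Y lam = (\<lambda>x. mt_a lam 0 * ln x + FF lam x)"
  using Y_eq by blast

lemma Y_ode:
  assumes lp: "0 < lam" and l2: "lam\<^sup>2 < 2" and t: "0 < t"
  shows "(mt_Y lam has_real_derivative (mt_a lam 0 / t + F1 lam t)) (at t) \<and>
    ((\<lambda>t. mt_a lam 0 / t + F1 lam t) has_real_derivative (- mt_a lam 0 / t\<^sup>2 + F2 lam t)) (at t) \<and>
    lam\<^sup>2 / 2 * t\<^sup>2 * (- mt_a lam 0 / t\<^sup>2 + F2 lam t) + t * (1 - t) * (mt_a lam 0 / t + F1 lam t) = -1"
proof (intro conjI)
  show "(mt_Y lam has_real_derivative (mt_a lam 0 / t + F1 lam t)) (at t)"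
    unfolding Y_fun[OF lp]
    by (rule derivative_eq_intros FF_deriv[OF lp] | use t in simp)+
  show "((\<lambda>t. mt_a lam 0 / t + F1 lam t) has_real_derivative (- mt_a lam 0 / t\<^sup>2 + F2 lam t)) (at t)"
    by (rule derivative_eq_intros F1_deriv[OF lp] | use t in \<open>simp add: power2_eq_square\<close>)+
  have e: "lam\<^sup>2 / 2 * t\<^sup>2 * (- mt_a lam 0 / t\<^sup>2 + F2 lam t) + t * (1 - t) * (mt_a lam 0 / t + F1 lam t)
     = (lam\<^sup>2 / 2 * (t\<^sup>2 * F2 lam t) + t * F1 lam t - t\<^sup>2 * F1 lam t) + mt_a lam 0 * (1 - t) - lam\<^sup>2 / 2 * mt_a lam 0"
    using t by (simp add: field_simps power2_eq_square del: mt_a.simps)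
  show "lam\<^sup>2 / 2 * t\<^sup>2 * (- mt_a lam 0 / t\<^sup>2 + F2 lam t) + t * (1 - t) * (mt_a lam 0 / t + F1 lam t) = -1"
    unfolding e sum_id[OF lp] using a0_prop[OF l2] by (simp add: algebra_simps del: mt_a.simps)
qed

definition PP :: "real \<Rightarrow> real \<Rightarrow> real" where "PP b t = (t powr (1 - b) - 1) / (b - 1)"

lemma PP_deriv: "0 < s \<Longrightarrow> 1 < b \<Longrightarrow> (PP b has_real_derivative - (s powr (- b))) (at s)"
  unfolding PP_def
  apply (rule derivative_eq_intros refl | simp)+
  apply (simp add: field_simps)
  done

lemma PP_nonneg: "0 < t \<Longrightarrow> t \<le> 1 \<Longrightarrow> 1 < b \<Longrightarrow> 0 \<le> PP b t"
proof -
  assume a: "0 < t" "t \<le> 1" "1 < b"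
  have "t powr (1 - b) = (1 / t) powr (b - 1)"
    using a by (simp add: powr_divide powr_minus_divide[symmetric] powr_minus)
  moreover have "1 \<le> (1 / t) powr (b - 1)"
    using a by (intro ge_one_powr_ge_zero) auto
  ultimately show ?thesis unfolding PP_def using a by simp
qed



lemma PP_cont: "0 < e \<Longrightarrow> 1 < b \<Longrightarrow> continuous_on {e..1} (PP b)"
  unfolding PP_def by (intro continuous_intros) auto

lemma PP_1: "PP b 1 = 0" unfolding PP_def by simp

lemma comp0:
  fixes V :: "real \<Rightarrow> real"
  assumes b: "1 < b" and e: "0 < e" "e \<le> t" "t \<le> 1" and c: "0 \<le> c"
    and cont: "continuous_on {e..1} V" and V1: "V 1 = 0"
    and dV: "\<And>s. e < s \<Longrightarrow> s < 1 \<Longrightarrow> (V has_real_derivative c * (s powr (- b) * exp (b * s))) (at s)"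
  shows "- c * exp b * PP b t \<le> V t \<and> V t \<le> - c * PP b t"
proof
  have q1: "s powr (- b) \<le> s powr (- b) * exp (b * s)" if "0 < s" for s
    using that b by (simp add: mult_le_cancel_left1)
  have q2: "s powr (- b) * exp (b * s) \<le> exp b * s powr (- b)" if "0 < s" "s < 1" for s
    using that b by (simp add: mult.commute)
  let ?g = "\<lambda>s. V s + c * exp b * PP b s"
  have "?g 1 \<le> ?g t"
  proof (rule DERIV_nonpos_imp_decreasing_open[OF e(3)])
    fix s assume s: "t < s" "s < 1"
    hence s0: "0 < s" "e < s" using e by auto
    show "\<exists>y. (?g has_real_derivative y) (at s) \<and> y \<le> 0"
    proof (intro exI conjI)
      show "(?g has_real_derivative c * (s powr (- b) * exp (b * s)) + c * exp b * (- (s powr (- b)))) (at s)"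
        by (intro DERIV_add dV DERIV_cmult PP_deriv s0 s b)
      have "c * (s powr (- b) * exp (b * s)) \<le> c * (exp b * s powr (- b))"
        using q2[OF s0(1) s(2)] c by (rule mult_left_mono)
      thus "c * (s powr (- b) * exp (b * s)) + c * exp b * (- (s powr (- b))) \<le> 0"
        by (simp add: algebra_simps)
    qed
  next
    show "continuous_on {t..1} ?g"
      using cont PP_cont[OF e(1) b] e
      by (intro continuous_intros) (auto elim: continuous_on_subset)
  qed
  thus "- c * exp b * PP b t \<le> V t" using V1 PP_1 by simp
  let ?h = "\<lambda>s. V s + c * PP b s"
  have "?h t \<le> ?h 1"
  proof (rule DERIV_nonneg_imp_increasing_open[OF e(3)])
    fix s assume s: "t < s" "s < 1"
    hence s0: "0 < s" "e < s" using e by auto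
    show "\<exists>y. (?h has_real_derivative y) (at s) \<and> 0 \<le> y"
    proof (intro exI conjI)
      show "(?h has_real_derivative c * (s powr (- b) * exp (b * s)) + c * (- (s powr (- b)))) (at s)"
        by (intro DERIV_add dV DERIV_cmult PP_deriv s0 s b)
      have "c * (s powr (- b)) \<le> c * (s powr (- b) * exp (b * s))"
        using q1[OF s0(1)] c by (rule mult_left_mono)
      thus "0 \<le> c * (s powr (- b) * exp (b * s)) + c * (- (s powr (- b)))"
        by (simp add: algebra_simps)
    qed
  next
    show "continuous_on {t..1} ?h"
      using cont PP_cont[OF e(1) b] e
      by (intro continuous_intros) (auto elim: continuous_on_subset)
  qed
  thus "V t \<le> - c * PP b t" using V1 PP_1 by simp
qed

lemma comp:
  fixes V :: "real \<Rightarrow> real"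
  assumes b: "1 < b" and e: "0 < e" "e \<le> t" "t \<le> 1"
    and cont: "continuous_on {e..1} V" and V1: "V 1 = 0"
    and dV: "\<And>s. e < s \<Longrightarrow> s < 1 \<Longrightarrow> (V has_real_derivative c * (s powr (- b) * exp (b * s))) (at s)"
  shows "\<bar>c\<bar> * PP b t \<le> \<bar>V t\<bar> \<and> \<bar>V t\<bar> \<le> \<bar>c\<bar> * exp b * PP b t"
proof -
  have P0: "0 \<le> PP b t" using PP_nonneg e b by auto
  show ?thesis
  proof (cases "0 \<le> c")
    case True
    from comp0[OF b e True cont V1 dV] have "- c * exp b * PP b t \<le> V t \<and> V t \<le> - c * PP b t" by auto
    moreover have "0 \<le> c * PP b t" using True P0 by simp
    ultimately show ?thesis using True by auto
  next
    case False
    have c': "0 \<le> - c" using False by simp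
    have dV': "((\<lambda>s. - V s) has_real_derivative (- c) * (s powr (- b) * exp (b * s))) (at s)"
      if "e < s" "s < 1" for s
      using DERIV_minus[OF dV[OF that]] by simp
    from comp0[OF b e c' _ _ dV'] cont V1
    have "- (- c) * exp b * PP b t \<le> - V t \<and> - V t \<le> - (- c) * PP b t"
      by (auto intro: continuous_intros)
    moreover have "0 \<le> - c * PP b t" using c' P0 by (simp add: mult_nonpos_nonneg)
    ultimately show ?thesis using False by auto
  qed
qed



lemma PP_pos: "0 < t \<Longrightarrow> t < 1 \<Longrightarrow> 1 < b \<Longrightarrow> 0 < PP b t"
proof -
  assume a: "0 < t" "t < 1" "1 < b"
  have "t powr (1 - b) = (1 / t) powr (b - 1)"
    using a by (simp add: powr_divide powr_minus_divide[symmetric] powr_minus)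
  moreover have "1 < (1 / t) powr (b - 1)"
    using a by (intro gr_one_powr) auto
  ultimately show ?thesis unfolding PP_def using a by simp
qed

lemma key_bound:
  fixes u :: "real \<Rightarrow> real" and u1 u2 :: "real \<Rightarrow> real"
  assumes lp: "0 < lam" and l2: "lam\<^sup>2 < 2" and e: "0 < e" "e < x" "x < 1"
    and cont: "continuous_on {e..1} u" and ue: "u e = 0" and u1: "u 1 = 0"
    and ode: "\<forall>x\<in>{e<..<1}.
            (u has_real_derivative u1 x) (at x) \<and>
            (u1 has_real_derivative u2 x) (at x) \<and>
            lam\<^sup>2 / 2 * x\<^sup>2 * u2 x + x * (1 - x) * u1 x = -1"
  shows "\<bar>u x - (mt_Y lam x - mt_Y lam 1)\<bar> \<le>
     exp (2 / lam\<^sup>2) * PP (2 / lam\<^sup>2) x * \<bar>(mt_Y lam e - mt_Y lam 1) / PP (2 / lam\<^sup>2) e\<bar>"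
proof -
  define b where "b = 2 / lam\<^sup>2"
  have b1: "1 < b" unfolding b_def using l2 lp by (simp add: field_simps)
  define K where "K = mt_Y lam 1"
  define Y1 where "Y1 t = mt_a lam 0 / t + F1 lam t" for t
  define Y2 where "Y2 t = - mt_a lam 0 / t\<^sup>2 + F2 lam t" for t
  define V where "V t = u t - (mt_Y lam t - K)" for t
  define W where "W t = u1 t - Y1 t" for t
  define \<mu> where "\<mu> t = t powr b * exp (- b * t)" for t
  have YO: "(mt_Y lam has_real_derivative Y1 t) (at t) \<and> (Y1 has_real_derivative Y2 t) (at t)
     \<and> lam\<^sup>2 / 2 * t\<^sup>2 * Y2 t + t * (1 - t) * Y1 t = -1" if "0 < t" for t
    unfolding Y1_def Y2_def using Y_ode[OF lp l2 that] by blast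
  have dV: "(V has_real_derivative W t) (at t)" if "t \<in> {e<..<1}" for t
    unfolding V_def W_def using ode that YO[of t] e by (auto intro!: derivative_eq_intros)
  have dW: "(W has_real_derivative (u2 t - Y2 t)) (at t)" if "t \<in> {e<..<1}" for t
    unfolding W_def using ode that YO[of t] e by (auto intro!: derivative_eq_intros)
  have W2: "u2 t - Y2 t = - b * (1 - t) / t * W t" if "t \<in> {e<..<1}" for t
  proof -
    have t0: "0 < t" using that e by auto
    have e1: "lam\<^sup>2 / 2 * t\<^sup>2 * u2 t + t * (1 - t) * u1 t = -1" using ode that by blast
    have e2: "lam\<^sup>2 / 2 * t\<^sup>2 * Y2 t + t * (1 - t) * Y1 t = -1" using YO[OF t0] by blast
    have "lam\<^sup>2 / 2 * t\<^sup>2 * (u2 t - Y2 t) + t * (1 - t) * W t =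
      (lam\<^sup>2 / 2 * t\<^sup>2 * u2 t + t * (1 - t) * u1 t) - (lam\<^sup>2 / 2 * t\<^sup>2 * Y2 t + t * (1 - t) * Y1 t)"
      unfolding W_def by (simp add: algebra_simps diff_divide_distrib)
    hence "lam\<^sup>2 / 2 * t\<^sup>2 * (u2 t - Y2 t) + t * (1 - t) * W t = 0" unfolding e1 e2 by simp
    hence "t * (lam\<^sup>2 / 2 * t * (u2 t - Y2 t) + (1 - t) * W t) = 0"
      by (simp add: algebra_simps power2_eq_square)
    hence h: "lam\<^sup>2 / 2 * t * (u2 t - Y2 t) + (1 - t) * W t = 0" using t0 by simp
    have "u2 t - Y2 t = (lam\<^sup>2 / 2 * t * (u2 t - Y2 t)) / (lam\<^sup>2 / 2 * t)" using t0 lp by simp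
    also have "lam\<^sup>2 / 2 * t * (u2 t - Y2 t) = - (1 - t) * W t" using h by linarith
    finally show ?thesis using t0 lp unfolding b_def by (simp add: field_simps)
  qed
  have dmu: "((\<lambda>t. \<mu> t * W t) has_real_derivative 0) (at t)" if "t \<in> {e<..<1}" for t
  proof -
    have t0: "0 < t" using that e by auto
    have pw: "t powr (b - 1) = t powr b / t" using t0 by (simp add: powr_diff)
    have dm: "(\<mu> has_real_derivative (b * t powr (b - 1) * exp (- b * t) - b * t powr b * exp (- b * t))) (at t)"
      unfolding \<mu>_def using t0 by (auto intro!: derivative_eq_intros simp: algebra_simps)
    have "((\<lambda>t. \<mu> t * W t) has_real_derivative
       (b * t powr (b - 1) * exp (- b * t) - b * t powr b * exp (- b * t)) * W t + (u2 t - Y2 t) * \<mu> t) (at t)"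
      by (rule DERIV_mult[OF dm dW[OF that]])
    also have "(b * t powr (b - 1) * exp (- b * t) - b * t powr b * exp (- b * t)) * W t + (u2 t - Y2 t) * \<mu> t = 0"
      unfolding W2[OF that] pw \<mu>_def using t0 by (simp add: field_simps)
    finally show ?thesis .
  qed
  obtain k where k: "\<forall>t\<in>{e<..<1}. \<mu> t * W t = k"
    using has_field_derivative_zero_constant[of "{e<..<1}" "\<lambda>t. \<mu> t * W t"]
      dmu by (auto intro: has_field_derivative_at_within)
  have dV': "(V has_real_derivative k * (t powr (- b) * exp (b * t))) (at t)" if "e < t" "t < 1" for t
  proof -
    have t0: "0 < t" using that e by auto
    have "W t = k * (t powr (- b) * exp (b * t))"
      using k that t0 unfolding \<mu>_def
      by (auto simp: powr_minus exp_minus field_simps)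
    thus ?thesis using dV[of t] that by simp
  qed
  have contY: "continuous_on {e..1} (mt_Y lam)"
  proof (intro continuous_at_imp_continuous_on ballI)
    fix t assume "t \<in> {e..1}"
    hence "0 < t" using e by auto
    thus "isCont (mt_Y lam) t" using YO[of t] DERIV_isCont by blast
  qed
  have contV: "continuous_on {e..1} V"
    unfolding V_def using cont contY by (intro continuous_intros)
  have V1: "V 1 = 0" unfolding V_def K_def using u1 by simp
  have cx: "\<bar>V x\<bar> \<le> \<bar>k\<bar> * exp b * PP b x"
    using comp[OF b1 e(1) _ _ contV V1 dV', of x] e by auto
  have ce: "\<bar>k\<bar> * PP b e \<le> \<bar>V e\<bar>"
    using comp[OF b1 e(1) _ _ contV V1 dV', of e] e by auto
  have Pe: "0 < PP b e" using PP_pos[OF e(1) _ b1] e by auto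
  have Px: "0 \<le> PP b x" using PP_nonneg[OF _ _ b1, of x] e by auto
  have kb: "\<bar>k\<bar> \<le> \<bar>V e\<bar> / PP b e" using ce Pe by (simp add: field_simps)
  have "\<bar>V x\<bar> \<le> \<bar>V e\<bar> / PP b e * (exp b * PP b x)"
    using cx mult_right_mono[OF kb, of "exp b * PP b x"] Px by (simp add: mult.assoc)
  also have "\<bar>V e\<bar> / PP b e = \<bar>(mt_Y lam e - K) / PP b e\<bar>"
    unfolding V_def ue using Pe by simp
  finally show ?thesis unfolding V_def K_def b_def by (simp add: mult_ac)
qed



lemma lim1: "(b::real) > 1 \<Longrightarrow> ((\<lambda>x::real. ln x / PP b x) \<longlongrightarrow> 0) (at_right 0)"
  unfolding PP_def by real_asymp
lemma lim2: "(b::real) > 1 \<Longrightarrow> ((\<lambda>x::real. 1 / PP b x) \<longlongrightarrow> 0) (at_right 0)"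
  unfolding PP_def by real_asymp
lemma lim3: "filterlim (\<lambda>x::real. - ln x) at_top (at_right 0)"
  by real_asymp

lemma FF_lim: "0 < lam \<Longrightarrow> (FF lam \<longlongrightarrow> FF lam 0) (at_right 0)"
proof -
  assume lp: "0 < lam"
  have "isCont (FF lam) 0" using FF_deriv[OF lp] DERIV_isCont by blast
  thus ?thesis unfolding isCont_def filterlim_at_split by simp
qed

theorem mainTheorem6:
  fixes lam :: real and u :: "real \<Rightarrow> real \<Rightarrow> real"
  assumes lam_pos: "0 < lam" and lam_lt: "lam < sqrt 2"
    and u_sol: "\<And>\<epsilon>. 0 < \<epsilon> \<Longrightarrow> \<epsilon> < 1 \<Longrightarrow>
        continuous_on {\<epsilon>..1} (u \<epsilon>) \<and> u \<epsilon> \<epsilon> = 0 \<and> u \<epsilon> 1 = 0 \<and>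
        (\<exists>u1 u2. \<forall>x\<in>{\<epsilon><..<1}.
            (u \<epsilon> has_real_derivative u1 x) (at x) \<and>
            (u1 has_real_derivative u2 x) (at x) \<and>
            lam\<^sup>2 / 2 * x\<^sup>2 * u2 x + x * (1 - x) * u1 x = -1)"
  shows "(\<forall>x::real. summable (\<lambda>n. mt_a lam (Suc n) * x ^ Suc n))
    \<and> (\<exists>Y1 Y2. \<forall>x>0.
            (mt_Y lam has_real_derivative Y1 x) (at x) \<and>
            (Y1 has_real_derivative Y2 x) (at x) \<and>
            lam\<^sup>2 / 2 * x\<^sup>2 * Y2 x + x * (1 - x) * Y1 x = -1)
    \<and> (\<forall>x\<in>{0<..<1}. ((\<lambda>\<epsilon>. u \<epsilon> x) \<longlongrightarrow> mt_Y lam x - mt_Y lam 1) (at_right 0))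
    \<and> (\<exists>v1 v2. \<forall>x\<in>{0<..<1}.
            ((\<lambda>y. mt_Y lam y - mt_Y lam 1) has_real_derivative v1 x) (at x) \<and>
            (v1 has_real_derivative v2 x) (at x) \<and>
            lam\<^sup>2 / 2 * x\<^sup>2 * v2 x + x * (1 - x) * v1 x = -1)
    \<and> mt_Y lam 1 - mt_Y lam 1 = 0
    \<and> filterlim (\<lambda>x. mt_Y lam x - mt_Y lam 1) at_top (at_right 0)"
proof (intro conjI)
  have l2: "lam\<^sup>2 < 2"
  proof -
    have "lam\<^sup>2 < (sqrt 2)\<^sup>2" using lam_pos lam_lt by (intro power_strict_mono) auto
    thus ?thesis by simp
  qed
  define K where "K = mt_Y lam 1"
  define a0 where "a0 = mt_a lam 0"
  have a0n: "a0 < 0" unfolding a0_def using a0_neg[OF l2] .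
  show "\<forall>x::real. summable (\<lambda>n. mt_a lam (Suc n) * x ^ Suc n)"
  proof
    fix x :: real
    have "summable (\<lambda>n. cc lam (Suc n) * x ^ Suc n)"
      by (rule summable_Suc_iff[THEN iffD2]) (rule cc_summable[OF lam_pos])
    thus "summable (\<lambda>n. mt_a lam (Suc n) * x ^ Suc n)" by (simp add: cc_def del: mt_a.simps)
  qed
  show "\<exists>Y1 Y2. \<forall>x>0.
            (mt_Y lam has_real_derivative Y1 x) (at x) \<and>
            (Y1 has_real_derivative Y2 x) (at x) \<and>
            lam\<^sup>2 / 2 * x\<^sup>2 * Y2 x + x * (1 - x) * Y1 x = -1"
    apply (rule exI[of _ "\<lambda>t. mt_a lam 0 / t + F1 lam t"])
    apply (rule exI[of _ "\<lambda>t. - mt_a lam 0 / t\<^sup>2 + F2 lam t"])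
    using Y_ode[OF lam_pos l2] by blast
  show "\<exists>v1 v2. \<forall>x\<in>{0<..<1}.
            ((\<lambda>y. mt_Y lam y - mt_Y lam 1) has_real_derivative v1 x) (at x) \<and>
            (v1 has_real_derivative v2 x) (at x) \<and>
            lam\<^sup>2 / 2 * x\<^sup>2 * v2 x + x * (1 - x) * v1 x = -1"
  proof (intro exI ballI conjI)
    fix x :: real assume x: "x \<in> {0<..<1}"
    hence x0: "0 < x" by auto
    note YO = Y_ode[OF lam_pos l2 x0]
    show "((\<lambda>y. mt_Y lam y - mt_Y lam 1) has_real_derivative mt_a lam 0 / x + F1 lam x) (at x)"
      using DERIV_diff[OF conjunct1[OF YO] DERIV_const] by simp
    show "((\<lambda>t. mt_a lam 0 / t + F1 lam t) has_real_derivative (- mt_a lam 0 / x\<^sup>2 + F2 lam x)) (at x)"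
      using YO by blast
    show "lam\<^sup>2 / 2 * x\<^sup>2 * (- mt_a lam 0 / x\<^sup>2 + F2 lam x) + x * (1 - x) * (mt_a lam 0 / x + F1 lam x) = -1"
      using YO by blast
  qed
  show "mt_Y lam 1 - mt_Y lam 1 = 0" by simp
  have FFK: "((\<lambda>x. FF lam x - K) \<longlongrightarrow> FF lam 0 - K) (at_right 0)"
    by (intro tendsto_intros FF_lim[OF lam_pos])
  show "filterlim (\<lambda>x. mt_Y lam x - mt_Y lam 1) at_top (at_right 0)"
  proof -
    have "filterlim (\<lambda>x. (- a0) * (- ln x)) at_top (at_right 0)"
      using a0n by (intro filterlim_tendsto_pos_mult_at_top[OF tendsto_const _ lim3]) auto
    hence "filterlim (\<lambda>x. (FF lam x - K) + (- a0) * (- ln x)) at_top (at_right 0)"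
      by (rule filterlim_tendsto_add_at_top[OF FFK])
    moreover have "(\<lambda>x. (FF lam x - K) + (- a0) * (- ln x)) = (\<lambda>x. mt_Y lam x - mt_Y lam 1)"
      unfolding K_def[symmetric] by (auto simp: Y_eq[OF lam_pos] a0_def simp del: mt_a.simps)
    ultimately show ?thesis by simp
  qed
  show "\<forall>x\<in>{0<..<1}. ((\<lambda>\<epsilon>. u \<epsilon> x) \<longlongrightarrow> mt_Y lam x - mt_Y lam 1) (at_right 0)"
  proof
    fix x :: real assume x: "x \<in> {0<..<1}"
    define b where "b = 2 / lam\<^sup>2"
    have b1: "1 < b" unfolding b_def using l2 lam_pos by (simp add: field_simps)
    have Q: "((\<lambda>e. (mt_Y lam e - K) / PP b e) \<longlongrightarrow> 0) (at_right 0)"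
    proof -
      have "((\<lambda>e. a0 * (ln e / PP b e) + (FF lam e - K) * (1 / PP b e)) \<longlongrightarrow> a0 * 0 + (FF lam 0 - K) * 0) (at_right 0)"
        by (intro tendsto_intros lim1[OF b1] lim2[OF b1] FFK)
      moreover have "(\<lambda>e. a0 * (ln e / PP b e) + (FF lam e - K) * (1 / PP b e)) = (\<lambda>e. (mt_Y lam e - K) / PP b e)"
        by (auto simp: Y_eq[OF lam_pos] a0_def add_divide_distrib diff_divide_distrib simp del: mt_a.simps)
      ultimately show ?thesis by simp
    qed
    have R: "((\<lambda>e. exp b * PP b x * \<bar>(mt_Y lam e - K) / PP b e\<bar>) \<longlongrightarrow> 0) (at_right 0)"
      using tendsto_mult[OF tendsto_const tendsto_rabs[OF Q], of "exp b * PP b x"] by simp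
    have ev: "\<forall>\<^sub>F e in at_right 0. norm (u e x - (mt_Y lam x - K)) \<le> exp b * PP b x * \<bar>(mt_Y lam e - K) / PP b e\<bar>"
      unfolding eventually_at_right_field
    proof (intro exI conjI allI impI)
      show "0 < x" using x by auto
      fix e :: real assume e: "0 < e" "e < x"
      have e1: "e < 1" using e x by auto
      from u_sol[OF e(1) e1] obtain u1 u2 where
        c: "continuous_on {e..1} (u e)" "u e e = 0" "u e 1 = 0" and
        o: "\<forall>x\<in>{e<..<1}.
            (u e has_real_derivative u1 x) (at x) \<and>
            (u1 has_real_derivative u2 x) (at x) \<and>
            lam\<^sup>2 / 2 * x\<^sup>2 * u2 x + x * (1 - x) * u1 x = -1" by blast
      from key_bound[OF lam_pos l2 e(1) e(2) _ c o] x
      show "norm (u e x - (mt_Y lam x - K)) \<le> exp b * PP b x * \<bar>(mt_Y lam e - K) / PP b e\<bar>"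
        unfolding K_def b_def by simp
    qed
    have "((\<lambda>e. u e x - (mt_Y lam x - K)) \<longlongrightarrow> 0) (at_right 0)"
      by (rule Lim_null_comparison[OF ev R])
    from tendsto_add[OF this tendsto_const[of "mt_Y lam x - K"]]
    show "((\<lambda>\<epsilon>. u \<epsilon> x) \<longlongrightarrow> mt_Y lam x - mt_Y lam 1) (at_right 0)" unfolding K_def by simp
  qed
qed

end
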